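(* Let $n\ge2$, $1\le i<j\le n$, $\nu>0$, and let $X_{(1)}\le\dots\le X_{(n)}$ be the order statistics of $n$ i.i.d. random variables uniform on $[0,1]$. Then $$\mathbb{E}\big[X_{(i)}^\nu X_{(j)}^\nu\big]=\frac{\Gamma(n+1)\,\Gamma(\nu+1)\,\Gamma(\nu+i)}{\Gamma(i)\,\Gamma(n+1-j)}\sum_{k=0}^{\infty}(-1)^k\frac{\Gamma(n+k+1-j)}{\Gamma(k+1)\,\Gamma(\nu+1-k)\,\Gamma(\nu+n+k+1)},$$ where $1/\Gamma(\nu+1-k)$ is interpreted as $0$ whenever $\nu+1-k$ is a nonpositive integer.
   Context: $\Gamma$ denotes the Euler gamma function. The joint density of $(X_{(i)},X_{(j)})$ for $i<j$ is $\frac{\Gamma(n+1)}{\Gamma(i)\Gamma(j-i)\Gamma(n+1-j)}u^{i-1}(v-u)^{j-i-1}(1-v)^{n-j}$ on $0\le u\le v\le1$. *)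

theory Defs
  imports "HOL-Probability.Probability"
begin

definition order_stat :: "nat \<Rightarrow> (nat \<Rightarrow> 'a \<Rightarrow> real) \<Rightarrow> nat \<Rightarrow> 'a \<Rightarrow> real" where
  "order_stat n X r w = sort (map (\<lambda>k. X k w) [1..<n+1]) ! (r - 1)"

end

theory Submission
  imports Defs
begin


lemma gchoose_Suc_rec: "(v::real) gchoose (Suc k) = (v gchoose k) * (v - real k) / real (Suc k)"
  by (simp add: gbinomial_pochhammer' pochhammer_rec field_simps)

lemma gchoose_bound:
  fixes v :: real assumes "v \<ge> 0"
  shows "\<exists>K. \<forall>k. \<bar>v gchoose k\<bar> \<le> K"
proof -
  define N where "N = nat \<lceil>v\<rceil>"
  define K where "K = Max ((\<lambda>k. \<bar>v gchoose k\<bar>) ` {..N})"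
  have le: "\<bar>v gchoose k\<bar> \<le> K" if "k \<le> N" for k
    unfolding K_def using that by (intro Max_ge) auto
  have "\<bar>v gchoose k\<bar> \<le> K" for k
  proof (cases "k \<le> N")
    case True then show ?thesis using le by auto
  next
    case False
    then have "N \<le> k" by auto
    then show ?thesis
    proof (induction k rule: dec_induct)
      case base then show ?case using le by auto
    next
      case (step k)
      have "real k \<ge> v" using step(1) unfolding N_def by linarith
      then have "\<bar>v - real k\<bar> / real (Suc k) \<le> 1" using assms by (simp add: field_simps)
      then have "\<bar>v gchoose Suc k\<bar> \<le> \<bar>v gchoose k\<bar> * 1"
        unfolding gchoose_Suc_rec abs_mult abs_divide
        by (metis abs_ge_zero abs_of_nat mult_left_mono times_divide_eq_right)
      then show ?case using step by simp
    qed
  qed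
  then show ?thesis by blast
qed

lemma powr_le_pow_unit:
  fixes t :: real assumes "0 \<le> t" "t \<le> 1" "real k \<le> e"
  shows "t powr e \<le> t ^ k"
proof (cases "t = 0")
  case True then show ?thesis by simp
next
  case False
  then have "t powr e \<le> t powr real k" using assms by (intro powr_mono') auto
  then show ?thesis using False assms by (simp add: powr_realpow)
qed

lemma series_sums:
  fixes v :: real and m p :: nat
  assumes v: "v > 0" and m: "m \<ge> 1" and p: "p \<ge> 2"
  shows "(\<lambda>k. (v gchoose k) * (-1)^k * Beta (real (m+k)) (v + real p)) sums Beta (real m) (2 * v + real p)"
proof -
  obtain K where K: "\<And>k. \<bar>v gchoose k\<bar> \<le> K" using gchoose_bound[of v] v by auto
  define f where "f N t = (\<Sum>k<N. (v gchoose k) * (-1)^k * (t powr (real (m+k) - 1) * (1-t) powr (v + real p - 1)))" for N t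
  define g where "g t = t powr (real m - 1) * (1-t) powr (2 * v + real p - 1)" for t :: real
  have int: "(f N has_integral (\<Sum>k<N. (v gchoose k) * (-1)^k * Beta (real (m+k)) (v + real p))) {0..1}" for N
  proof -
    have hb: "((\<lambda>t. t powr (real (m+k) - 1) * (1-t) powr (v + real p - 1)) has_integral Beta (real (m+k)) (v + real p)) {0..1}" for k
      by (rule has_integral_Beta_real) (use v m in auto)
    show ?thesis unfolding f_def
      by (intro has_integral_sum has_integral_mult_right hb) auto
  qed
  have gint: "(g has_integral Beta (real m) (2 * v + real p)) {0..1}"
    unfolding g_def using has_integral_Beta_real[of "real m" "2 * v + real p"] v m by auto
  have bound: "norm (f N t) \<le> K" if t: "t \<in> {0..1}" for N t
  proof (cases "t = 1")
    case True then show ?thesis using K[of 0] by (simp add: f_def)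
  next
    case False
    with t have t1: "0 \<le> t" "t < 1" by auto
    have pk: "(1-t) powr (v + real p - 1) \<le> 1 - t"
    proof -
      have "(1-t) powr (v + real p - 1) \<le> (1-t) powr 1"
        using t1 v p by (intro powr_mono') auto
      then show ?thesis using t1 by simp
    qed
    have "norm (f N t) \<le> (\<Sum>k<N. \<bar>(v gchoose k) * (-1)^k * (t powr (real (m+k) - 1) * (1-t) powr (v + real p - 1))\<bar>)"
      unfolding f_def real_norm_def by (rule sum_abs)
    also have "\<dots> \<le> (\<Sum>k<N. K * (t ^ k * (1 - t)))"
    proof (intro sum_mono)
      fix k assume "k \<in> {..<N}"
      have a: "t powr (real (m+k) - 1) \<le> t ^ k" using t1 m by (intro powr_le_pow_unit) auto
      have "\<bar>(v gchoose k) * (-1)^k * (t powr (real (m+k) - 1) * (1-t) powr (v + real p - 1))\<bar>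
          = \<bar>v gchoose k\<bar> * (t powr (real (m+k) - 1) * (1-t) powr (v + real p - 1))"
        by (simp add: abs_mult)
      also have "\<dots> \<le> K * (t ^ k * (1 - t))"
        using K[of k] a pk t1 by (intro mult_mono) (auto intro!: mult_mono)
      finally show "\<bar>(v gchoose k) * (-1)^k * (t powr (real (m+k) - 1) * (1-t) powr (v + real p - 1))\<bar> \<le> K * (t ^ k * (1 - t))" .
    qed
    also have "\<dots> = K * (1 - t ^ N)"
      using t1 by (simp add: sum_distrib_left[symmetric] sum_distrib_right[symmetric] sum_gp_strict)
    also have "\<dots> \<le> K" using K[of 0] t1 by (simp add: mult_left_le)
    finally show ?thesis .
  qed
  have conv: "(\<lambda>N. f N t) \<longlonglongrightarrow> g t" if t: "t \<in> {0..1}" for t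
  proof -
    consider "t = 0" | "t = 1" | "0 < t" "t < 1" using t by fastforce
    then show ?thesis
    proof cases
      case 1 then show ?thesis using m by (simp add: f_def g_def)
    next
      case 2 then show ?thesis using v p by (simp add: f_def g_def)
    next
      case 3
      have "(\<lambda>k. (v gchoose k) * (-t)^k) sums (1 + -t) powr v"
        by (rule gen_binomial_real) (use 3 in auto)
      then have "(\<lambda>N. (\<Sum>k<N. (v gchoose k) * (-t)^k)) \<longlonglongrightarrow> (1 - t) powr v"
        by (simp add: sums_def)
      then have "(\<lambda>N. (\<Sum>k<N. (v gchoose k) * (-t)^k) * (t powr (real m - 1) * (1-t) powr (v + real p - 1)))
           \<longlonglongrightarrow> (1 - t) powr v * (t powr (real m - 1) * (1-t) powr (v + real p - 1))"
        by (intro tendsto_intros)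
      moreover have "(\<Sum>k<N. (v gchoose k) * (-t)^k) * (t powr (real m - 1) * (1-t) powr (v + real p - 1)) = f N t" for N
        unfolding f_def sum_distrib_right
      proof (intro sum.cong refl)
        fix k
        have "t powr (real (m+k) - 1) = t powr (real m - 1) * t ^ k"
          using 3 by (simp add: powr_add[symmetric] powr_realpow[symmetric] algebra_simps)
        then show "(v gchoose k) * (-t)^k * (t powr (real m - 1) * (1-t) powr (v + real p - 1))
          = (v gchoose k) * (-1)^k * (t powr (real (m+k) - 1) * (1-t) powr (v + real p - 1))"
          by (simp add: power_minus')
      qed
      moreover have "(1 - t) powr v * (t powr (real m - 1) * (1-t) powr (v + real p - 1)) = g t"
        using 3 by (simp add: g_def powr_add[symmetric] algebra_simps)
      ultimately show ?thesis by simp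
    qed
  qed
  have "(\<lambda>N. integral {0..1} (f N)) \<longlonglongrightarrow> integral {0..1} g"
    by (rule dominated_convergence(2)[where h = "\<lambda>_. K"])
       (use int bound conv in \<open>auto simp: integrable_on_def\<close>)
  moreover have "integral {0..1} (f N) = (\<Sum>k<N. (v gchoose k) * (-1)^k * Beta (real (m+k)) (v + real p))" for N
    using int by (rule integral_unique)
  moreover have "integral {0..1} g = Beta (real m) (2 * v + real p)"
    using gint by (rule integral_unique)
  ultimately show ?thesis
    unfolding sums_def by simp
qed



definition U :: "real measure" where "U = uniform_measure lborel {0..1}"
definition osl :: "nat set \<Rightarrow> (nat \<Rightarrow> real) \<Rightarrow> real list" where
  "osl J x = sort (map x (sorted_list_of_set J))"
definition pw :: "real \<Rightarrow> real \<Rightarrow> real" where "pw y c = (if c = 0 then 1 else y powr c)"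
definition G :: "(nat \<Rightarrow> real) \<Rightarrow> nat set \<Rightarrow> (nat \<Rightarrow> real) \<Rightarrow> real" where
  "G a J x = (\<Prod>r<card J. pw (osl J x ! r) (a r))"
definition inB :: "nat set \<Rightarrow> nat set \<Rightarrow> real \<Rightarrow> (nat \<Rightarrow> real) \<Rightarrow> bool" where
  "inB J S t x = (\<forall>k\<in>J. x k \<le> t \<and> (k \<in> S \<longrightarrow> x k < t))"
definition inR :: "nat set \<Rightarrow> nat \<Rightarrow> (nat \<Rightarrow> real) \<Rightarrow> bool" where
  "inR J m x = (\<forall>k\<in>J. x k \<le> x m \<and> (k < m \<longrightarrow> x k < x m))"

lemma insort_nth:
  fixes ys :: "real list"
  assumes "sorted ys" "r \<le> length ys"
  shows "insort a ys ! r = (if r < length ys \<and> ys!r < a then ys!r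
           else if r = 0 \<or> ys!(r-1) < a then a else ys!(r-1))"
  using assms
proof (induction ys arbitrary: r)
  case Nil then show ?case by simp
next
  case (Cons y ys r)
  show ?case
  proof (cases "a \<le> y")
    case True
    have al: "\<forall>q<length ys. a \<le> ys ! q" using Cons.prems True
      by (auto intro: order.trans[OF True] dest: nth_mem)
    show ?thesis
    proof (cases r)
      case 0 then show ?thesis using True by simp
    next
      case (Suc r')
      have al2: "\<And>q. ys ! q < a \<Longrightarrow> q < length ys \<Longrightarrow> False" using al by force
      show ?thesis using Suc al True Cons.prems
        by (cases r') (auto simp: not_less elim: al2)
    qed
  next
    case False
    show ?thesis
    proof (cases r)
      case 0 then show ?thesis using False by simp
    next
      case (Suc r')
      have IH: "insort a ys ! r' = (if r' < length ys \<and> ys!r' < a then ys!r'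
           else if r' = 0 \<or> ys!(r'-1) < a then a else ys!(r'-1))"
        using Cons Suc by auto
      show ?thesis using False IH Suc by (cases r') auto
    qed
  qed
qed

lemma sort_nth_measurable:
  fixes F :: "nat \<Rightarrow> 'b \<Rightarrow> real"
  assumes "\<And>k. k \<in> set L \<Longrightarrow> F k \<in> borel_measurable M" "r < length L"
  shows "(\<lambda>w. sort (map (\<lambda>k. F k w) L) ! r) \<in> borel_measurable M"
  using assms
proof (induction L arbitrary: r)
  case Nil then show ?case by simp
next
  case (Cons k0 L r)
  define S where "S w = sort (map (\<lambda>k. F k w) L)" for w
  have Fm[measurable]: "F k0 \<in> borel_measurable M" using Cons by auto
  have Sm: "(\<lambda>w. S w ! q) \<in> borel_measurable M" if "q < length L" for q
    unfolding S_def using Cons that by auto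
  have eq: "sort (map (\<lambda>k. F k w) (k0 # L)) ! r = (if r < length L \<and> S w ! r < F k0 w then S w ! r
           else if r = 0 \<or> S w ! (r-1) < F k0 w then F k0 w else S w ! (r-1))" for w
    unfolding S_def using Cons.prems by (simp add: insort_nth)
  consider "r = 0" "L = []" | "r = 0" "L \<noteq> []" | "r > 0" "r < length L" | "r > 0" "r = length L"
    using Cons.prems by fastforce
  then show ?case
  proof cases
    case 1 then show ?thesis unfolding eq by simp
  next
    case 2
    have [measurable]: "(\<lambda>w. S w ! 0) \<in> borel_measurable M" using Sm 2 by auto
    have "(\<lambda>w. sort (map (\<lambda>k. F k w) (k0 # L)) ! r) = (\<lambda>w. if S w ! 0 < F k0 w then S w ! 0 else F k0 w)"
      using 2 unfolding eq by auto
    moreover have "(\<lambda>w. if S w ! 0 < F k0 w then S w ! 0 else F k0 w) \<in> borel_measurable M"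
      using Fm by measurable
    ultimately show ?thesis by simp
  next
    case 3
    note [measurable] = Sm[of r] Sm[of "r-1"]
    show ?thesis unfolding eq using 3 by simp
  next
    case 4
    have [measurable]: "(\<lambda>w. S w ! (r-1)) \<in> borel_measurable M" using Sm 4 by auto
    have "(\<lambda>w. sort (map (\<lambda>k. F k w) (k0 # L)) ! r) = (\<lambda>w. if S w ! (r-1) < F k0 w then F k0 w else S w ! (r-1))"
      using 4 unfolding eq by auto
    moreover have "(\<lambda>w. if S w ! (r-1) < F k0 w then F k0 w else S w ! (r-1)) \<in> borel_measurable M"
      using Fm by measurable
    ultimately show ?thesis by simp
  qed
qed


lemma emeasure_01: "emeasure lborel {0..1::real} = 1" by simp

lemma prob_U: "prob_space U"
  unfolding U_def by (rule prob_space_uniform_measure) auto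

lemma sets_U: "sets U = sets borel"
  unfolding U_def by simp

lemma space_U[simp]: "space U = UNIV"
  unfolding U_def by simp


lemma comp_meas:
  assumes "k \<in> J" shows "(\<lambda>x. x k) \<in> borel_measurable (PiM J (\<lambda>_. U))"
proof -
  have "(\<lambda>x. x k) \<in> measurable (PiM J (\<lambda>_. U)) U"
    using assms by (rule measurable_component_singleton)
  then show ?thesis using measurable_cong_sets[OF refl sets_U, of "PiM J (\<lambda>_. U)"] by simp
qed



lemma length_osl[simp]: "finite J \<Longrightarrow> length (osl J x) = card J"
  by (simp add: osl_def)


lemma osl_meas:
  assumes "finite J" "r < card J"
  shows "(\<lambda>x. osl J x ! r) \<in> borel_measurable (PiM J (\<lambda>_. U))"
proof -
  have "(\<lambda>x. sort (map (\<lambda>k. x k) (sorted_list_of_set J)) ! r) \<in> borel_measurable (PiM J (\<lambda>_. U))"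
  proof (rule sort_nth_measurable[where F="\<lambda>k x. x k"])
    fix k assume "k \<in> set (sorted_list_of_set J)"
    then have "k \<in> J" using assms(1) by simp
    then show "(\<lambda>x. x k) \<in> borel_measurable (PiM J (\<lambda>_. U))" by (rule comp_meas)
  next
    show "r < length (sorted_list_of_set J)" using assms by simp
  qed
  then show ?thesis unfolding osl_def .
qed


lemma pw_meas[measurable]: "(\<lambda>y. pw y c) \<in> borel_measurable borel"
  unfolding pw_def by measurable

lemma G_meas:
  assumes "finite J"
  shows "G a J \<in> borel_measurable (PiM J (\<lambda>_. U))"
proof -
  have "(\<lambda>x. \<Prod>r<card J. pw (osl J x ! r) (a r)) \<in> borel_measurable (PiM J (\<lambda>_. U))"
  proof (intro borel_measurable_prod)
    fix r assume "r \<in> {..<card J}"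
    then have "r < card J" by simp
    then show "(\<lambda>x. pw (osl J x ! r) (a r)) \<in> borel_measurable (PiM J (\<lambda>_. U))"
      by (rule measurable_compose[OF osl_meas[OF assms(1)] pw_meas])
  qed
  then show ?thesis unfolding G_def[abs_def] .
qed


lemma inB_meas:
  assumes "finite J" shows "Measurable.pred (PiM J (\<lambda>_. U)) (inB J S t)"
  unfolding inB_def
proof (intro pred_intros_finite assms(1))
  fix k assume k: "k \<in> J"
  have a: "(\<lambda>x. x k) \<in> borel_measurable (PiM J (\<lambda>_. U))" using k by (rule comp_meas)
  have 1: "Measurable.pred (PiM J (\<lambda>_. U)) (\<lambda>x. x k \<le> t)"
    unfolding Measurable.pred_def by (rule borel_measurable_le[OF a measurable_const]) auto
  have 2: "Measurable.pred (PiM J (\<lambda>_. U)) (\<lambda>x. x k < t)"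
    by (rule borel_measurable_pred_less[OF a measurable_const]) auto
  show "Measurable.pred (PiM J (\<lambda>_. U)) (\<lambda>x. x k \<le> t \<and> (k \<in> S \<longrightarrow> x k < t))"
    by (intro pred_intros_logic 1 2 measurable_const) auto
qed

lemma inR_meas:
  assumes "finite J" "m \<in> J" shows "Measurable.pred (PiM J (\<lambda>_. U)) (inR J m)"
  unfolding inR_def
proof (intro pred_intros_finite assms(1))
  fix k assume k: "k \<in> J"
  have a: "(\<lambda>x. x k) \<in> borel_measurable (PiM J (\<lambda>_. U))" using k by (rule comp_meas)
  have b: "(\<lambda>x. x m) \<in> borel_measurable (PiM J (\<lambda>_. U))" using assms(2) by (rule comp_meas)
  have 1: "Measurable.pred (PiM J (\<lambda>_. U)) (\<lambda>x. x k \<le> x m)"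
    unfolding Measurable.pred_def by (rule borel_measurable_le[OF a b])
  have 2: "Measurable.pred (PiM J (\<lambda>_. U)) (\<lambda>x. x k < x m)"
    by (rule borel_measurable_pred_less[OF a b])
  show "Measurable.pred (PiM J (\<lambda>_. U)) (\<lambda>x. x k \<le> x m \<and> (k < m \<longrightarrow> x k < x m))"
    by (intro pred_intros_logic 1 2 measurable_const) auto
qed


lemma mset_sl: "finite A \<Longrightarrow> mset (sorted_list_of_set A) = mset_set A"
  by (metis mset_sorted_list_of_multiset sorted_list_of_mset_set)

lemma osl_cong: "finite J \<Longrightarrow> (\<And>k. k \<in> J \<Longrightarrow> x k = x' k) \<Longrightarrow> osl J x = osl J x'"
  unfolding osl_def by (intro arg_cong[where f=sort] map_cong) auto

lemma osl_insert:
  assumes "finite J" "m \<notin> J" "\<forall>k\<in>J. x k \<le> x m"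
  shows "osl (insert m J) x = osl J x @ [x m]"
  unfolding osl_def
proof (rule properties_for_sort)
  show "mset (sort (map x (sorted_list_of_set J)) @ [x m]) = mset (map x (sorted_list_of_set (insert m J)))"
    using assms by (simp add: mset_sl)
  show "sorted (sort (map x (sorted_list_of_set J)) @ [x m])"
    using assms by (auto simp: sorted_append)
qed

lemma G_insert:
  assumes "finite J" "m \<notin> J" "\<forall>k\<in>J. x k \<le> y"
  shows "G a (insert m J) (x(m := y)) = G a J x * pw y (a (card J))"
proof -
  have "\<forall>k\<in>J. (x(m:=y)) k \<le> (x(m:=y)) m" using assms by auto
  then have "osl (insert m J) (x(m := y)) = osl J (x(m:=y)) @ [y]"
    using osl_insert[OF assms(1,2)] by simp
  also have "osl J (x(m:=y)) = osl J x" using assms by (intro osl_cong) auto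
  finally have e: "osl (insert m J) (x(m := y)) = osl J x @ [y]" .
  show ?thesis
    unfolding G_def e using assms
    by (simp add: nth_append)
qed


lemma uniqR:
  assumes "finite J" "J \<noteq> {}"
  shows "\<exists>!m. m \<in> J \<and> inR J m x"
proof -
  define Mx where "Mx = Max (x ` J)"
  define m where "m = Min {k\<in>J. x k = Mx}"
  have "Mx \<in> x ` J" unfolding Mx_def using assms by (intro Max_in) auto
  then obtain k0 where "k0 \<in> J" "x k0 = Mx" by auto
  then have ne: "{k\<in>J. x k = Mx} \<noteq> {}" by auto
  have fin: "finite {k\<in>J. x k = Mx}" using assms by auto
  have mJ: "m \<in> J" "x m = Mx" using Min_in[OF fin ne] unfolding m_def by auto
  have le: "x k \<le> Mx" if "k \<in> J" for k unfolding Mx_def using assms that by auto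
  have "inR J m x" unfolding inR_def
  proof
    fix k assume k: "k \<in> J"
    show "x k \<le> x m \<and> (k < m \<longrightarrow> x k < x m)"
    proof
      show "x k \<le> x m" using le[OF k] mJ by simp
      show "k < m \<longrightarrow> x k < x m"
      proof
        assume "k < m"
        then have "x k \<noteq> Mx" using Min_le[OF fin, of k] k unfolding m_def by auto
        then show "x k < x m" using le[OF k] mJ by simp
      qed
    qed
  qed
  moreover have "m' = m" if "m' \<in> J" "inR J m' x" for m'
  proof (rule ccontr)
    assume "m' \<noteq> m"
    then consider "m' < m" | "m < m'" by linarith
    then show False
    proof cases
      case 1
      have "x m' < x m" using \<open>inR J m x\<close> that(1) 1 unfolding inR_def by blast
      moreover have "x m \<le> x m'" using that(2) mJ(1) unfolding inR_def by blast
      ultimately show False by simp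
    next
      case 2
      have "x m < x m'" using that(2) mJ(1) 2 unfolding inR_def by blast
      moreover have "x m' \<le> x m" using \<open>inR J m x\<close> that(1) unfolding inR_def by blast
      ultimately show False by simp
    qed
  qed
  ultimately show ?thesis using mJ by blast
qed

lemma sumR:
  assumes "finite J" "J \<noteq> {}"
  shows "(\<Sum>m\<in>J. (if inR J m x then c else 0)) = (c::ennreal)"
proof -
  obtain m0 where m0: "m0 \<in> J" "inR J m0 x" "\<And>m. m \<in> J \<Longrightarrow> inR J m x \<Longrightarrow> m = m0"
    using uniqR[OF assms, of x] by blast
  have "(\<Sum>m\<in>J. (if inR J m x then c else 0)) = (\<Sum>m\<in>J. (if m = m0 then c else 0))"
  proof (intro sum.cong refl)
    fix m assume "m \<in> J"
    then show "(if inR J m x then c else 0) = (if m = m0 then c else 0)"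
    proof (cases "m = m0")
      case True then show ?thesis using m0(2) by simp
    next
      case False
      then have "\<not> inR J m x" using m0(3) \<open>m \<in> J\<close> by blast
      then show ?thesis using False by simp
    qed
  qed
  also have "\<dots> = c" using m0(1) assms(1) by (subst sum.delta) auto
  finally show ?thesis .
qed




lemma int1d:
  fixes t c K :: real
  assumes "c \<ge> 0" "t \<ge> 0" "K \<ge> 0"
  shows "(\<integral>\<^sup>+y. ennreal (indicator {0..t} y * (K * y powr c)) \<partial>lborel) = ennreal (K * (t powr (c+1) / (c+1)))"
proof -
  have "((\<lambda>y. K * y powr c) has_integral K * (t powr (c+1) / (c+1))) {0..t}"
    by (intro has_integral_mult_right has_integral_powr_from_0) (use assms in auto)
  from nn_integral_has_integral_lebesgue[OF _ this] assms
  show ?thesis by (simp add: ennreal_mult' mult.assoc)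
qed

definition E :: "(nat \<Rightarrow> real) \<Rightarrow> nat \<Rightarrow> real" where "E a n = real n + (\<Sum>r<n. a r)"
fun C :: "(nat \<Rightarrow> real) \<Rightarrow> nat \<Rightarrow> real" where
  "C a 0 = 1"
| "C a (Suc n) = real (Suc n) / E a (Suc n) * C a n"

lemma E_nonneg: "(\<And>r. 0 \<le> a r) \<Longrightarrow> 0 \<le> E a n"
  unfolding E_def by (intro add_nonneg_nonneg sum_nonneg) auto

lemma C_nonneg: "(\<And>r. 0 \<le> a r) \<Longrightarrow> 0 \<le> C a n"
  by (induction n) (auto intro!: mult_nonneg_nonneg divide_nonneg_nonneg E_nonneg)

lemma E_Suc: "E a (Suc n) = E a n + a n + 1"
  unfolding E_def by simp

lemma h_meas:
  assumes "finite J" "m \<in> J"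
  shows "(\<lambda>x. if inR J m x \<and> inB J S t x then ennreal (G a J x) else 0) \<in> borel_measurable (PiM J (\<lambda>_. U))"
proof -
  have g: "(\<lambda>x. ennreal (G a J x)) \<in> borel_measurable (PiM J (\<lambda>_. U))"
    by (rule measurable_compose[OF G_meas[OF assms(1)] measurable_ennreal])
  have p: "Measurable.pred (PiM J (\<lambda>_. U)) (\<lambda>x. inR J m x \<and> inB J S t x)"
    by (intro pred_intros_logic inR_meas[OF assms] inB_meas[OF assms(1)])
  show ?thesis
    by (rule measurable_If[OF g measurable_const]) (use p in \<open>auto simp: Measurable.pred_def\<close>)
qed

lemma f_meas:
  assumes "finite J"
  shows "(\<lambda>x. if inB J S t x then ennreal (G a J x) else 0) \<in> borel_measurable (PiM J (\<lambda>_. U))"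
proof -
  have g: "(\<lambda>x. ennreal (G a J x)) \<in> borel_measurable (PiM J (\<lambda>_. U))"
    by (rule measurable_compose[OF G_meas[OF assms(1)] measurable_ennreal])
  show ?thesis
    by (rule measurable_If[OF g measurable_const]) (use inB_meas[OF assms(1)] in \<open>auto simp: Measurable.pred_def\<close>)
qed

lemma AE_U: "AE y in U. 0 < y \<and> y \<le> 1 \<and> y \<noteq> t"
proof -
  have "AE y in lborel. y \<in> {0..1::real} \<longrightarrow> 0 < y \<and> y \<le> 1 \<and> y \<noteq> t"
    using AE_lborel_singleton[of "0::real"] AE_lborel_singleton[of t]
    by eventually_elim auto
  then show ?thesis unfolding U_def by (subst AE_uniform_measure) auto
qed

lemma outer:
  fixes t e K :: real
  assumes "0 < t" "t \<le> 1" "e \<ge> 0" "K \<ge> 0"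
    and ae: "AE y in U. F y = ennreal (indicator {0..t} y * (K * y powr e))"
  shows "(\<integral>\<^sup>+y. F y \<partial>U) = ennreal (K * (t powr (e+1) / (e+1)))"
proof -
  have "(\<integral>\<^sup>+y. F y \<partial>U) = (\<integral>\<^sup>+y. ennreal (indicator {0..t} y * (K * y powr e)) \<partial>U)"
    using ae by (rule nn_integral_cong_AE)
  also have "\<dots> = (\<integral>\<^sup>+y. ennreal (indicator {0..t} y * (K * y powr e)) * indicator {0..1} y \<partial>lborel) / emeasure lborel {0..1::real}"
    unfolding U_def by (rule nn_integral_uniform_measure) auto
  also have "\<dots> = (\<integral>\<^sup>+y. ennreal (indicator {0..t} y * (K * y powr e)) \<partial>lborel)"
  proof -
    have "ennreal (indicator {0..t} y * (K * y powr e)) * indicator {0..1} y = ennreal (indicator {0..t} y * (K * y powr e))" for y :: real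
      using assms(2) by (auto simp: indicator_def)
    then show ?thesis by (simp add: divide_ennreal_def)
  qed
  also have "\<dots> = ennreal (K * (t powr (e+1) / (e+1)))"
    using assms by (intro int1d) auto
  finally show ?thesis .
qed

lemma pw_nonneg: "0 \<le> pw y c" unfolding pw_def by auto

lemma G_nonneg: "0 \<le> G a J x" unfolding G_def by (intro prod_nonneg) (auto simp: pw_nonneg)

lemma pw_pos: "0 < y \<Longrightarrow> pw y c = y powr c" unfolding pw_def by auto

lemma cond_iff:
  assumes "m \<notin> J'" "y < t"
  shows "(inR (insert m J') m (x(m:=y)) \<and> inB (insert m J') S t (x(m:=y))) = inB J' {k. k < m} y x"
proof -
  have ne: "k \<in> J' \<Longrightarrow> k \<noteq> m" for k using assms by auto
  show ?thesis using assms ne unfolding inR_def inB_def by force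
qed

lemma term_val:
  assumes fin: "finite J" and mJ: "m \<in> J" and cJ: "card J = Suc n"
    and a: "\<And>r. 0 \<le> a r" and t: "0 < t" "t \<le> 1"
    and IH: "\<And>J' S' t'. finite J' \<Longrightarrow> card J' = n \<Longrightarrow> 0 < t' \<Longrightarrow> t' \<le> 1 \<Longrightarrow>
       (\<integral>\<^sup>+x. (if inB J' S' t' x then ennreal (G a J' x) else 0) \<partial>PiM J' (\<lambda>_. U)) = ennreal (C a n * t' powr E a n)"
  shows "(\<integral>\<^sup>+x. (if inR J m x \<and> inB J S t x then ennreal (G a J x) else 0) \<partial>PiM J (\<lambda>_. U))
       = ennreal (C a n * (t powr (E a n + a n + 1) / (E a n + a n + 1)))"
proof -
  define J' where "J' = J - {m}"
  have J: "J = insert m J'" "m \<notin> J'" "finite J'" "card J' = n"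
    using fin mJ cJ unfolding J'_def by auto
  interpret product_sigma_finite "\<lambda>_::nat. U"
    unfolding product_sigma_finite_def using prob_space_imp_sigma_finite[OF prob_U] by simp
  define h where "h x = (if inR J m x \<and> inB J S t x then ennreal (G a J x) else 0)" for x
  have hm: "h \<in> borel_measurable (PiM (insert m J') (\<lambda>_. U))"
    using h_meas[OF fin mJ, of S t a] unfolding h_def[abs_def] J(1)[symmetric] .
  have "(\<integral>\<^sup>+x. h x \<partial>PiM J (\<lambda>_. U)) = (\<integral>\<^sup>+x. h x \<partial>PiM (insert m J') (\<lambda>_. U))"
    using J(1) by simp
  also have "\<dots> = (\<integral>\<^sup>+y. (\<integral>\<^sup>+x. h (x(m := y)) \<partial>PiM J' (\<lambda>_. U)) \<partial>U)"
    by (rule product_nn_integral_insert_rev[OF J(3) J(2) hm])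
  also have "\<dots> = ennreal (C a n * (t powr (E a n + a n + 1) / (E a n + a n + 1)))"
  proof (rule outer[OF t])
    show "0 \<le> E a n + a n" using E_nonneg[of a n] a by (simp add: a)
    show "0 \<le> C a n" using C_nonneg a by blast
    show "AE y in U. (\<integral>\<^sup>+x. h (x(m := y)) \<partial>PiM J' (\<lambda>_. U)) =
       ennreal (indicator {0..t} y * (C a n * y powr (E a n + a n)))"
      using AE_U[of t]
    proof eventually_elim
      fix y assume y: "0 < y \<and> y \<le> 1 \<and> y \<noteq> t"
      show "(\<integral>\<^sup>+x. h (x(m := y)) \<partial>PiM J' (\<lambda>_. U)) =
         ennreal (indicator {0..t} y * (C a n * y powr (E a n + a n)))"
      proof (cases "y < t")
        case True
        define f where "f x = (if inB J' {k. k < m} y x then ennreal (G a J' x) else 0)" for x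
        have pt: "h (x(m := y)) = f x * ennreal (pw y (a n))" for x
        proof (cases "inB J' {k. k < m} y x")
          case True2: True
          have le: "\<forall>k\<in>J'. x k \<le> y" using True2 unfolding inB_def by auto
          have "G a J (x(m := y)) = G a J' x * pw y (a n)"
            using G_insert[OF J(3) J(2) le, of a] J(1,4) by simp
          then show ?thesis
            using cond_iff[OF J(2) \<open>y < t\<close>, of x S] True2 J(1)
            by (simp add: h_def f_def ennreal_mult G_nonneg pw_nonneg)
        next
          case False
          then show ?thesis
            using cond_iff[OF J(2) \<open>y < t\<close>, of x S] J(1)
            unfolding h_def f_def by auto
        qed
        have "(\<integral>\<^sup>+x. h (x(m := y)) \<partial>PiM J' (\<lambda>_. U)) = (\<integral>\<^sup>+x. f x * ennreal (pw y (a n)) \<partial>PiM J' (\<lambda>_. U))"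
          by (simp add: pt)
        also have "\<dots> = (\<integral>\<^sup>+x. f x \<partial>PiM J' (\<lambda>_. U)) * ennreal (pw y (a n))"
          by (rule nn_integral_multc) (unfold f_def[abs_def], rule f_meas[OF J(3)])
        also have "(\<integral>\<^sup>+x. f x \<partial>PiM J' (\<lambda>_. U)) = ennreal (C a n * y powr E a n)"
          unfolding f_def using IH[OF J(3) J(4)] y by auto
        also have "ennreal (C a n * y powr E a n) * ennreal (pw y (a n)) =
            ennreal (C a n * y powr (E a n + a n))"
          using y C_nonneg[of a n] a
          by (simp add: pw_pos ennreal_mult[symmetric] powr_add)
        finally have eq: "(\<integral>\<^sup>+x. h (x(m := y)) \<partial>PiM J' (\<lambda>_. U)) = ennreal (C a n * y powr (E a n + a n))" .
        have "indicator {0..t} y = (1::real)" using True y by (simp add: indicator_def)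
        then show ?thesis unfolding eq by simp
      next
        case False
        then have "y > t" using y by auto
        then have "h (x(m := y)) = 0" for x
          using J(1) unfolding h_def inB_def by auto
        then show ?thesis using \<open>y > t\<close> by (simp add: indicator_def)
      qed
    qed
  qed
  finally show ?thesis unfolding h_def .
qed

lemma key:
  assumes "finite J" "\<And>r. 0 \<le> a r" "0 < t" "t \<le> 1"
  shows "(\<integral>\<^sup>+x. (if inB J S t x then ennreal (G a J x) else 0) \<partial>PiM J (\<lambda>_. U))
       = ennreal (C a (card J) * t powr E a (card J))"
  using assms
proof (induction "card J" arbitrary: J S t)
  case 0
  then have J: "J = {}" by auto
  have "(\<integral>\<^sup>+x. (if inB J S t x then ennreal (G a J x) else 0) \<partial>PiM J (\<lambda>_. U)) = 1"
    unfolding J by (simp add: PiM_empty inB_def G_def)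
  then show ?case using J 0 by (simp add: E_def)
next
  case (Suc n)
  have fin: "finite J" and ne: "J \<noteq> {}" using Suc by auto
  have IH: "\<And>J' S' t'. finite J' \<Longrightarrow> card J' = n \<Longrightarrow> 0 < t' \<Longrightarrow> t' \<le> 1 \<Longrightarrow>
       (\<integral>\<^sup>+x. (if inB J' S' t' x then ennreal (G a J' x) else 0) \<partial>PiM J' (\<lambda>_. U)) = ennreal (C a n * t' powr E a n)"
    using Suc by metis
  have dec: "(if inB J S t x then ennreal (G a J x) else 0)
      = (\<Sum>m\<in>J. (if inR J m x \<and> inB J S t x then ennreal (G a J x) else 0))" for x
  proof -
    have "(\<Sum>m\<in>J. (if inR J m x \<and> inB J S t x then ennreal (G a J x) else 0))
        = (\<Sum>m\<in>J. (if inR J m x then (if inB J S t x then ennreal (G a J x) else 0) else 0))"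
      by (intro sum.cong) auto
    also have "\<dots> = (if inB J S t x then ennreal (G a J x) else 0)"
      by (rule sumR[OF fin ne])
    finally show ?thesis by simp
  qed
  have "(\<integral>\<^sup>+x. (if inB J S t x then ennreal (G a J x) else 0) \<partial>PiM J (\<lambda>_. U))
      = (\<integral>\<^sup>+x. (\<Sum>m\<in>J. (if inR J m x \<and> inB J S t x then ennreal (G a J x) else 0)) \<partial>PiM J (\<lambda>_. U))"
    by (simp only: dec[symmetric])
  also have "\<dots> = (\<Sum>m\<in>J. (\<integral>\<^sup>+x. (if inR J m x \<and> inB J S t x then ennreal (G a J x) else 0) \<partial>PiM J (\<lambda>_. U)))"
    by (rule nn_integral_sum) (rule h_meas[OF fin])
  also have "\<dots> = (\<Sum>m\<in>J. ennreal (C a n * (t powr (E a n + a n + 1) / (E a n + a n + 1))))"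
    by (intro sum.cong refl term_val[OF fin _ Suc.hyps(2)[symmetric] Suc.prems(2,3,4) IH]) auto
  also have "\<dots> = of_nat (card J) * ennreal (C a n * (t powr (E a n + a n + 1) / (E a n + a n + 1)))"
    by (rule sum_constant)
  also have "\<dots> = ennreal (real (Suc n) * (C a n * (t powr (E a n + a n + 1) / (E a n + a n + 1))))"
    using Suc.hyps(2) by (subst ennreal_mult') (auto simp: ennreal_of_nat_eq_real_of_nat)
  also have "real (Suc n) * (C a n * (t powr (E a n + a n + 1) / (E a n + a n + 1))) = C a (Suc n) * t powr E a (Suc n)"
  proof -
    have "E a n + a n + 1 > 0" using E_nonneg[of a n, OF Suc.prems(2)] Suc.prems(2)[of n] by linarith
    then show ?thesis by (simp add: E_Suc field_simps)
  qed
  finally show ?case using Suc.hyps(2) by simp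
qed



lemma Gp1: "(x::real) > 0 \<Longrightarrow> Gamma (x + 1) = x * Gamma x"
  by (rule Gamma_plus1) (auto dest: nonpos_Ints_nonpos)

locale AA =
  fixes i j :: nat and v :: real
  assumes i1: "1 \<le> i" and ij: "i < j" and v: "v > 0"
begin

definition a :: "nat \<Rightarrow> real" where "a r = (if r = i - 1 \<or> r = j - 1 then v else 0)"

lemma a_nonneg: "0 \<le> a r" unfolding a_def using v by auto

lemma sum_a: "(\<Sum>r<k. a r) = (if i \<le> k then v else 0) + (if j \<le> k then v else 0)"
proof (induction k)
  case 0 then show ?case using i1 ij by simp
next
  case (Suc k)
  show ?case using Suc i1 ij by (auto simp: a_def)
qed

lemma C1: "k < i \<Longrightarrow> C a k = 1"
proof (induction k)
  case 0 then show ?case by simp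
next
  case (Suc k)
  then have "C a k = 1" by simp
  then show ?case using Suc.prems ij unfolding C.simps E_def sum_a by simp
qed

lemma C2: "i - 1 \<le> k \<Longrightarrow> k < j \<Longrightarrow> C a k = Gamma (real k + 1) * Gamma (v + real i) / (Gamma (real i) * Gamma (real k + 1 + v))"
proof (induction k rule: dec_induct)
  case base
  have "real (i - 1) + 1 = real i" using i1 by simp
  moreover have "Gamma (real i) \<noteq> 0" "Gamma (v + real i) \<noteq> 0" using v i1 by (auto intro!: less_imp_neq[symmetric])
  ultimately show ?case using C1[of "i - 1"] i1 v by (simp add: add.commute)
next
  case (step k)
  have E: "E a (Suc k) = real k + 1 + v" using step i1 unfolding E_def sum_a by auto
  have g1: "Gamma (real (Suc k) + 1) = (real k + 1) * Gamma (real k + 1)"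
    using Gp1[of "real k + 1"] by simp
  have g2: "Gamma (real (Suc k) + 1 + v) = (real k + 1 + v) * Gamma (real k + 1 + v)"
    using Gp1[of "real k + 1 + v"] v by (simp add: add_ac)
  have p: "Gamma (real i) > 0" "Gamma (real k + 1 + v) > 0" "real k + 1 + v > 0" using v i1 by auto
  show ?case using step p unfolding C.simps E g1 g2 by (simp add: field_simps)
qed

lemma C3: "j - 1 \<le> k \<Longrightarrow> C a k = Gamma (real k + 1) * Gamma (v + real i) * Gamma (2 * v + real j)
     / (Gamma (real i) * Gamma (v + real j) * Gamma (real k + 1 + 2 * v))"
proof (induction k rule: dec_induct)
  case base
  have "real (j - 1) + 1 = real j" using ij by simp
  moreover have "Gamma (real j + 2 * v) = Gamma (2 * v + real j)" by (simp add: add_ac)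
  moreover have "Gamma (real j + v) = Gamma (v + real j)" by (simp add: add_ac)
  moreover have "Gamma (2 * v + real j) \<noteq> 0" "Gamma (v + real j) \<noteq> 0" "Gamma (real i) \<noteq> 0"
    "Gamma (real j + v * 2) \<noteq> 0" "Gamma (real j) \<noteq> 0" "Gamma (v + real i) \<noteq> 0" using v i1 ij by (auto intro!: less_imp_neq[symmetric])
  ultimately show ?case using C2[of "j - 1"] i1 ij v by (simp add: field_simps)
next
  case (step k)
  have E: "E a (Suc k) = real k + 1 + 2 * v" using step i1 ij unfolding E_def sum_a by auto
  have g1: "Gamma (real (Suc k) + 1) = (real k + 1) * Gamma (real k + 1)"
    using Gp1[of "real k + 1"] by simp
  have g2: "Gamma (real (Suc k) + 1 + 2 * v) = (real k + 1 + 2 * v) * Gamma (real k + 1 + 2 * v)"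
    using Gp1[of "real k + 1 + 2 * v"] v by (simp add: add_ac)
  have p: "Gamma (real i) > 0" "Gamma (real k + 1 + 2 * v) > 0" "real k + 1 + 2 * v > 0"
     "Gamma (v + real j) > 0" using v i1 by auto
  show ?case using step p unfolding C.simps E g1 g2 by (simp add: field_simps)
qed

end



context AA begin

lemma prod_a:
  assumes "j \<le> n"
  shows "(\<Prod>r<n. pw (ys ! r) (a r)) = ys ! (i-1) powr v * ys ! (j-1) powr v"
proof -
  have sub: "{i-1, j-1} \<subseteq> {..<n}" using assms i1 ij by auto
  have "(\<Prod>r<n. pw (ys ! r) (a r)) = (\<Prod>r\<in>{i-1, j-1}. pw (ys ! r) (a r))"
    by (rule prod.mono_neutral_right[OF _ sub]) (auto simp: a_def pw_def)
  also have "\<dots> = pw (ys ! (i-1)) (a (i-1)) * pw (ys ! (j-1)) (a (j-1))"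
    using i1 ij by simp
  also have "\<dots> = ys ! (i-1) powr v * ys ! (j-1) powr v"
    using v by (simp add: a_def pw_def)
  finally show ?thesis .
qed

lemma term_eq:
  assumes "j \<le> n"
  shows "(-1) ^ k * Gamma (real n + real k + 1 - real j)
              / (Gamma (real k + 1) * Gamma (v + real n + real k + 1)) * rGamma (v + 1 - real k)
   = rGamma (v + 1) / Gamma (v + real j) * ((v gchoose k) * (-1)^k * Beta (real (n + 1 - j + k)) (v + real j))"
proof -
  define m where "m = n + 1 - j"
  have f1: "real n + real k + 1 - real j = real (m + k)" using assms unfolding m_def by simp
  have f2: "Gamma (real k + 1) = fact k" using Gamma_fact[of k, where 'a=real] by (simp add: add.commute)
  have f3: "rGamma (v + 1 - real k) = pochhammer (v + 1 - real k) k * rGamma (v + 1)"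
    using pochhammer_rGamma[of "v + 1 - real k" k] by simp
  have f4: "v gchoose k = pochhammer (v + 1 - real k) k / fact k"
  proof -
    have "v - real k + 1 = v + 1 - real k" by simp
    then show ?thesis by (simp only: gbinomial_pochhammer' of_nat_id)
  qed
  have f5: "Beta (real (m+k)) (v + real j) = Gamma (real (m+k)) * Gamma (v + real j) / Gamma (v + real n + real k + 1)"
    unfolding Beta_def using assms by (simp add: m_def algebra_simps)
  have nz: "Gamma (v + real j) \<noteq> 0" "Gamma (v + real n + real k + 1) \<noteq> 0" "(fact k :: real) \<noteq> 0"
    using v by (auto intro!: less_imp_neq[symmetric])
  show ?thesis unfolding m_def[symmetric] f1 f2 f3 f4 f5 using nz by (simp add: field_simps)
qed

end



theorem mainTheorem4:
  fixes M :: "'a measure" and X :: "nat \<Rightarrow> 'a \<Rightarrow> real"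
    and n i j :: nat and \<nu> :: real
  assumes "prob_space M"
    and "n \<ge> 2" and "1 \<le> i" and "i < j" and "j \<le> n" and "\<nu> > 0"
    and "prob_space.indep_vars M (\<lambda>_. borel) X {1..n}"
    and "\<And>k. k \<in> {1..n} \<Longrightarrow> distr M borel (X k) = uniform_measure lborel {0..1}"
  shows "summable (\<lambda>k::nat. (-1) ^ k * Gamma (real n + real k + 1 - real j)
              / (Gamma (real k + 1) * Gamma (\<nu> + real n + real k + 1)) * rGamma (\<nu> + 1 - real k))
     \<and> integral\<^sup>L M (\<lambda>w. order_stat n X i w powr \<nu> * order_stat n X j w powr \<nu>)
       = Gamma (real n + 1) * Gamma (\<nu> + 1) * Gamma (\<nu> + real i)
           / (Gamma (real i) * Gamma (real n + 1 - real j))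
         * (\<Sum>k. (-1) ^ k * Gamma (real n + real k + 1 - real j)
              / (Gamma (real k + 1) * Gamma (\<nu> + real n + real k + 1)) * rGamma (\<nu> + 1 - real k))"
proof -
  interpret P: prob_space M by fact
  interpret A: AA i j \<nu> using assms by unfold_locales auto
  define J where "J = {1..n}"
  have finJ: "finite J" "card J = n" "J \<noteq> {}" using assms(2) unfolding J_def by auto
  have rv: "X k \<in> measurable M borel" if "k \<in> J" for k
    using assms(7) that unfolding P.indep_vars_def2 J_def by auto
  define Y where "Y w = (\<lambda>k\<in>J. X k w)" for w
  have distrY: "distr M (PiM J (\<lambda>_. borel)) Y = PiM J (\<lambda>_. U)"
  proof -
    have "distr M (PiM J (\<lambda>_. borel)) Y = PiM J (\<lambda>k. distr M borel (X k))"
      using P.indep_vars_iff_distr_eq_PiM'[where I=J and M'="\<lambda>_. borel" and X=X] finJ rv assms(7)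
      unfolding Y_def J_def by auto
    also have "\<dots> = PiM J (\<lambda>_. U)"
      by (rule PiM_cong) (auto simp: U_def J_def assms(8))
    finally show ?thesis .
  qed
  have Ymeas: "Y \<in> measurable M (PiM J (\<lambda>_. borel))"
    unfolding Y_def by (rule measurable_restrict) (rule rv)
  have setsP: "sets (PiM J (\<lambda>_. U)) = sets (PiM J (\<lambda>_. borel))"
    by (rule sets_PiM_cong) (auto simp: sets_U)
  have Gm: "G A.a J \<in> borel_measurable (PiM J (\<lambda>_. borel))"
    using G_meas[OF finJ(1)] unfolding measurable_cong_sets[OF setsP refl] .
  have integrand: "order_stat n X i w powr \<nu> * order_stat n X j w powr \<nu> = G A.a J (Y w)" for w
  proof -
    have sl: "sorted_list_of_set J = [1..<n+1]"
    proof -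
      have "J = {1..<n+1}" unfolding J_def by auto
      then show ?thesis by (simp only: sorted_list_of_set_range)
    qed
    have mm: "map (Y w) [1..<n+1] = map (\<lambda>k. X k w) [1..<n+1]"
      unfolding Y_def J_def by (intro map_cong) auto
    have o: "osl J (Y w) = sort (map (\<lambda>k. X k w) [1..<n+1])"
      unfolding osl_def sl mm ..
    show ?thesis
      unfolding G_def finJ(2) A.prod_a[OF assms(5)] o order_stat_def ..
  qed
  have AEB: "AE x in PiM J (\<lambda>_. U). inB J {} 1 x"
    unfolding inB_def
  proof (rule eventually_ball_finite[OF finJ(1)], intro ballI)
    fix k assume "k \<in> J"
    have "AE y in U. y \<le> 1" using AE_U[of 1] by eventually_elim auto
    then show "AE x in PiM J (\<lambda>_. U). x k \<le> 1 \<and> (k \<in> {} \<longrightarrow> x k < 1)"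
      using AE_PiM_component[of J "\<lambda>_. U" k "\<lambda>y. y \<le> 1"] prob_U \<open>k \<in> J\<close> by auto
  qed
  have Cn: "0 \<le> C A.a n" using C_nonneg A.a_nonneg by blast
  have "integral\<^sup>L M (\<lambda>w. order_stat n X i w powr \<nu> * order_stat n X j w powr \<nu>)
      = integral\<^sup>L M (\<lambda>w. G A.a J (Y w))"
    by (simp only: integrand)
  also have "\<dots> = integral\<^sup>L (distr M (PiM J (\<lambda>_. borel)) Y) (G A.a J)"
    by (rule integral_distr[OF Ymeas Gm, symmetric])
  also have "\<dots> = integral\<^sup>L (PiM J (\<lambda>_. U)) (G A.a J)"
    unfolding distrY ..
  also have "\<dots> = enn2real (\<integral>\<^sup>+x. ennreal (G A.a J x) \<partial>PiM J (\<lambda>_. U))"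
    by (rule integral_eq_nn_integral[OF G_meas[OF finJ(1)]]) (simp add: G_nonneg)
  also have "(\<integral>\<^sup>+x. ennreal (G A.a J x) \<partial>PiM J (\<lambda>_. U))
      = (\<integral>\<^sup>+x. (if inB J {} 1 x then ennreal (G A.a J x) else 0) \<partial>PiM J (\<lambda>_. U))"
  proof (rule nn_integral_cong_AE)
    show "AE x in PiM J (\<lambda>_. U). ennreal (G A.a J x) = (if inB J {} 1 x then ennreal (G A.a J x) else 0)"
      using AEB by eventually_elim simp
  qed
  also have "\<dots> = ennreal (C A.a n * 1 powr E A.a n)"
    using key[OF finJ(1) A.a_nonneg, of 1 "{}"] finJ(2) by simp
  also have "enn2real (ennreal (C A.a n * 1 powr E A.a n)) = C A.a n"
    using Cn by simp
  also have "C A.a n = Gamma (real n + 1) * Gamma (\<nu> + real i) * Gamma (2 * \<nu> + real j)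
     / (Gamma (real i) * Gamma (\<nu> + real j) * Gamma (real n + 1 + 2 * \<nu>))"
    using assms(5) by (intro A.C3) auto
  finally have lhs: "integral\<^sup>L M (\<lambda>w. order_stat n X i w powr \<nu> * order_stat n X j w powr \<nu>) =
     Gamma (real n + 1) * Gamma (\<nu> + real i) * Gamma (2 * \<nu> + real j)
     / (Gamma (real i) * Gamma (\<nu> + real j) * Gamma (real n + 1 + 2 * \<nu>))" .
  define m where "m = n + 1 - j"
  have m1: "m \<ge> 1" and j2: "j \<ge> 2" using assms unfolding m_def by auto
  define R where "R = rGamma (\<nu> + 1) / Gamma (\<nu> + real j)"
  have sums: "(\<lambda>k::nat. (-1) ^ k * Gamma (real n + real k + 1 - real j)
              / (Gamma (real k + 1) * Gamma (\<nu> + real n + real k + 1)) * rGamma (\<nu> + 1 - real k))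
     sums (R * Beta (real m) (2 * \<nu> + real j))"
  proof -
    have "(\<lambda>k. R * ((\<nu> gchoose k) * (-1)^k * Beta (real (m+k)) (\<nu> + real j))) sums (R * Beta (real m) (2 * \<nu> + real j))"
      by (intro sums_mult series_sums m1 j2 assms(6))
    moreover have "R * ((\<nu> gchoose k) * (-1)^k * Beta (real (m+k)) (\<nu> + real j)) =
       (-1) ^ k * Gamma (real n + real k + 1 - real j)
              / (Gamma (real k + 1) * Gamma (\<nu> + real n + real k + 1)) * rGamma (\<nu> + 1 - real k)" for k
      unfolding R_def m_def using A.term_eq[OF assms(5), of k] by simp
    ultimately show ?thesis by simp
  qed
  have fin: "Gamma (real n + 1) * Gamma (\<nu> + 1) * Gamma (\<nu> + real i)
           / (Gamma (real i) * Gamma (real n + 1 - real j)) * (R * Beta (real m) (2 * \<nu> + real j))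
     = Gamma (real n + 1) * Gamma (\<nu> + real i) * Gamma (2 * \<nu> + real j)
     / (Gamma (real i) * Gamma (\<nu> + real j) * Gamma (real n + 1 + 2 * \<nu>))"
  proof -
    have rm: "real m = real n + 1 - real j" using assms(5) unfolding m_def by simp
    have b: "Beta (real m) (2 * \<nu> + real j) = Gamma (real m) * Gamma (2 * \<nu> + real j) / Gamma (real n + 1 + 2 * \<nu>)"
      unfolding Beta_def rm by (simp add: algebra_simps)
    have r: "rGamma (\<nu> + 1) * Gamma (\<nu> + 1) = 1"
      using assms(6) by (simp add: rGamma_inverse_Gamma field_simps less_imp_neq[symmetric])
    have nz: "Gamma (real m) \<noteq> 0" "Gamma (real i) \<noteq> 0" "Gamma (\<nu> + real j) \<noteq> 0"
        "Gamma (real n + 1 + 2 * \<nu>) \<noteq> 0" "Gamma (\<nu> + 1) \<noteq> 0"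
      using m1 assms(3,6) by (auto intro!: less_imp_neq[symmetric])
    show ?thesis unfolding R_def b rm[symmetric] using nz r by (simp add: field_simps)
  qed
  show ?thesis
    using sums_summable[OF sums] sums_unique[OF sums] lhs fin by simp
qed


end
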